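(* Let $P,Q$ be posets with least elements and $\langle f,g\rangle:P\times Q\to P\times Q$ a monotone map (with $f:P\times Q\to P$, $g:P\times Q\to Q$, product ordered coordinatewise). Let $m,n\ge0$ be such that for every $x\in P$ the map $g_x=g(x,-)$ satisfies $\mu_y.g(x,y)=g_x^m(\bot)$, and such that the map $h(x)=f(x,\mu_y.g(x,y))$ satisfies $\mu.h=h^n(\bot)$. Then $\langle f,g\rangle$ has a least fixed point and $\mu.\langle f,g\rangle=\langle f,g\rangle^{(n+1)(m+1)-1}(\bot,\bot)$.
   Context: $\mu.k$ denotes the least fixed point of a monotone map $k$; $k^n$ the $n$-fold composite. *)

theory Defs
  imports Main "HOL-Library.Product_Order"
begin

definition is_lfp :: "('a::order \<Rightarrow> 'a) \<Rightarrow> 'a \<Rightarrow> bool" where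
  "is_lfp k x \<longleftrightarrow> k x = x \<and> (\<forall>y. k y = y \<longrightarrow> x \<le> y)"

text \<open>The least fixed point mu.k (meaningful when it exists).\<close>
definition mu :: "('a::order \<Rightarrow> 'a) \<Rightarrow> 'a" where
  "mu k = (THE x. is_lfp k x)"

end

theory Submission
  imports Defs
begin

lemma is_lfp_mu: "is_lfp k (x::'a::order) \<Longrightarrow> mu k = x"
  unfolding mu_def
  by (rule the_equality) (auto simp: is_lfp_def intro: order.antisym)

theorem mainTheorem14:
  fixes f :: "'p::order_bot \<times> 'q::order_bot \<Rightarrow> 'p"
    and g :: "'p \<times> 'q \<Rightarrow> 'q"
    and m n :: nat
  assumes mono_fg: "mono (\<lambda>z. (f z, g z))"
    and hg: "\<forall>x. is_lfp (\<lambda>y. g (x, y)) (((\<lambda>y. g (x, y)) ^^ m) bot)"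
    and hh: "is_lfp (\<lambda>x. f (x, mu (\<lambda>y. g (x, y))))
               (((\<lambda>x. f (x, mu (\<lambda>y. g (x, y)))) ^^ n) bot)"
  shows "is_lfp (\<lambda>z. (f z, g z))
           (((\<lambda>z. (f z, g z)) ^^ ((n + 1) * (m + 1) - 1)) (bot, bot))"
proof -
  define F where "F = (\<lambda>z. (f z, g z))"
  define G where "G = (\<lambda>x y. g (x, y))"
  have mF: "\<And>x y x' y'. x \<le> x' \<Longrightarrow> y \<le> y' \<Longrightarrow> f (x,y) \<le> f (x',y') \<and> g (x,y) \<le> g (x',y')"
  proof -
    fix x x' :: 'p and y y' :: 'q assume "x \<le> x'" "y \<le> y'"
    hence "(x,y) \<le> (x',y')" by (simp add: less_eq_prod_def)
    hence "(f (x,y), g (x,y)) \<le> (f (x',y'), g (x',y'))" using monoD[OF mono_fg, of "(x,y)" "(x',y')"] by simp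
    thus "f (x,y) \<le> f (x',y') \<and> g (x,y) \<le> g (x',y')" by (simp add: less_eq_prod_def)
  qed
  have giter: "\<And>x x'. x \<le> x' \<Longrightarrow> (G x ^^ i) bot \<le> (G x' ^^ i) bot" for i
    by (induction i) (auto simp: G_def mF)
  have mu_eq: "\<And>x. mu (G x) = (G x ^^ m) bot"
    using hg by (auto simp: G_def intro: is_lfp_mu)
  define h where "h = (\<lambda>x. f (x, (G x ^^ m) bot))"
  have hm: "\<And>x x'. x \<le> x' \<Longrightarrow> h x \<le> h x'"
    unfolding h_def using giter mF by blast
  have heq: "(\<lambda>x. f (x, mu (\<lambda>y. g (x, y)))) = h"
    using mu_eq by (auto simp: h_def G_def)
  have hh': "is_lfp h ((h ^^ n) bot)" using hh heq by simp
  define a where "a = (h ^^ n) bot"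
  define b where "b = (G a ^^ m) bot"
  have ha: "h a = a" using hh' by (simp add: is_lfp_def a_def)
  have gb: "G a b = b" using hg by (simp add: is_lfp_def b_def G_def)
  have fix_ab: "F (a,b) = (a,b)"
    using ha gb by (simp add: F_def h_def b_def G_def)
  have least: "(a,b) \<le> (x,y)" if fx: "F (x,y) = (x,y)" for x y
  proof -
    have fx1: "f (x,y) = x" and fx2: "g (x,y) = y" using fx by (auto simp: F_def)
    have gy: "(G x ^^ i) bot \<le> y" for i
    proof (induction i)
      case (Suc i) thus ?case using mF[OF order.refl Suc, of x] fx2 by (simp add: G_def)
    qed simp
    have hx: "h x \<le> x" using mF[OF order.refl gy[of m], of x] fx1 by (simp add: h_def)
    have hj: "(h ^^ j) bot \<le> x" for j
    proof (induction j)
      case (Suc j) thus ?case using hm[OF Suc] hx by simp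
    qed simp
    have "a \<le> x" using hj a_def by simp
    moreover have "b \<le> y" using giter[OF \<open>a \<le> x\<close>, of m] gy[of m] b_def by simp
    ultimately show ?thesis by (simp add: less_eq_prod_def)
  qed
  define z where "z = (\<lambda>t. (F ^^ t) (bot, bot))"
  have zS: "z (Suc t) = F (z t)" for t by (simp add: z_def)
  have mFF: "\<And>u v. u \<le> v \<Longrightarrow> F u \<le> F v"
    using monoD[OF mono_fg] unfolding F_def by blast
  have chain: "z t \<le> z (Suc t)" for t
  proof (induction t)
    case 0 thus ?case by (simp add: z_def less_eq_prod_def)
  next
    case (Suc t) thus ?case using mFF zS by metis
  qed
  have zup: "z t \<le> (a,b)" for t
  proof (induction t)
    case 0 thus ?case by (simp add: z_def less_eq_prod_def)
  next
    case (Suc t) thus ?case using mFF zS fix_ab by metis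
  qed
  have B: "x \<le> fst (z t) \<Longrightarrow> (x, (G x ^^ i) bot) \<le> z (t+i)" for x t i
  proof (induction i)
    case 0 thus ?case by (simp add: less_eq_prod_def)
  next
    case (Suc i)
    have 1: "F (x, (G x ^^ i) bot) \<le> z (t + Suc i)" using mFF[OF Suc.IH[OF Suc.prems]] zS by simp
    have 2: "x \<le> fst (z (t + Suc i))" using Suc.IH[OF Suc.prems] chain[of "t+i"]
      by (auto simp: less_eq_prod_def)
    show ?case using 1 2 by (auto simp: less_eq_prod_def F_def G_def)
  qed
  have A: "(h ^^ j) bot \<le> fst (z (j*(m+1)))" for j
  proof (induction j)
    case 0 thus ?case by simp
  next
    case (Suc j)
    have e: "Suc j * (m+1) = Suc (j*(m+1) + m)" by simp
    have "F ((h ^^ j) bot, (G ((h ^^ j) bot) ^^ m) bot) \<le> z (Suc j * (m+1))"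
      unfolding e zS using mFF[OF B[OF Suc.IH, of m]] by simp
    thus ?case by (simp add: F_def h_def less_eq_prod_def)
  qed
  have N: "(n + 1) * (m + 1) - 1 = n*(m+1) + m" by simp
  have "(a,b) \<le> z (n*(m+1) + m)" using B[OF A[of n], of m] by (simp add: a_def b_def)
  hence zN: "z ((n + 1) * (m + 1) - 1) = (a,b)" using zup N by (metis order.antisym)
  have zN': "(F ^^ ((n + 1) * (m + 1) - 1)) (bot, bot) = (a,b)" using zN by (simp only: z_def)
  have "is_lfp F (a,b)" unfolding is_lfp_def using fix_ab least by auto
  thus ?thesis using zN' by (simp only: F_def)
qed

end
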